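(* Let $(N(t))_{t\ge 0}$ be the continuous-time Markov chain on $\{1,2,3,\dots\}$ in which state $1$ is absorbing, from state $2$ the chain jumps to $1$ at rate $2$ and to $3$ at rate $2$, and from each state $n\ge 3$ it jumps to $n+1$ at rate $n$ and to $n-1$ at rate $n$. Start at $N(0)=2$, let $H_1$ be the hitting time of state $1$, and let $F(t)=\mathrm{P}(H_1\le t)$ (which is the solution of the renewal equation $F(t) = \frac{2t}{(1+t)^{3}} + \int_{0}^{t}\frac{2}{(1+(t-y))^{3}}F(y)\, \mathrm{d} y$), with density $F'$. Then, as $h\to\infty$, \[ \int_0^{h}tF'(t)\,\mathrm{d} t \sim \log(h) \qquad\text{and}\qquad \int_0^{h}t^2F'(t)\,\mathrm{d} t \sim h . \]
   Context: Here $a(h)\sim b(h)$ means $a(h)/b(h)\to 1$ as $h\to\infty$. The chain describes the number of coexisting viral types in a birth–death model with equal birth and death rates (each equal to the current number of types), where a single type cannot die; $H_1$ is the return time from two types to one type. *)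

theory Defs
  imports "HOL-Analysis.Analysis" "HOL-Library.Landau_Symbols"
begin

definition renewal_solution :: "(real \<Rightarrow> real) \<Rightarrow> bool" where
  "renewal_solution F \<longleftrightarrow> continuous_on {0..} F \<and>
     (\<forall>t\<ge>0. F t = 2 * t / (1 + t) ^ 3
        + integral {0..t} (\<lambda>y. 2 / (1 + (t - y)) ^ 3 * F y))"

end

theory Submission
  imports Defs "HOL-Real_Asymp.Real_Asymp"
begin

lemma psi_deriv:
  fixes h h' :: "real \<Rightarrow> real"
  assumes hd: "\<And>u. u \<ge> 0 \<Longrightarrow> (h has_real_derivative h' u) (at u)"
  shows "((\<lambda>u. h (max u 0) - h 0 - h' 0 * max u 0) has_real_derivative (h' (max x 0) - h' 0)) (at x)"
proof (cases "x > 0")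
  case True
  have "((\<lambda>u. h u - h 0 - h' 0 * u) has_real_derivative (h' (max x 0) - h' 0)) (at x)"
    using hd[of x] True by (auto intro!: derivative_eq_intros)
  then show ?thesis
    by (rule has_field_derivative_transform_within_open[where S="{0<..}"]) (use True in auto)
next
  case False
  show ?thesis
  proof (cases "x < 0")
    case True
    have "((\<lambda>u. 0::real) has_real_derivative 0) (at x)" by (rule DERIV_const)
    then have "((\<lambda>u. h (max u 0) - h 0 - h' 0 * max u 0) has_real_derivative 0) (at x)"
      by (rule has_field_derivative_transform_within_open[where S="{..<0}"]) (use True in auto)
    then show ?thesis using True by simp
  next
    case False
    with \<open>\<not> x > 0\<close> have x0: "x = 0" by simp
    have L: "((\<lambda>y. ((h (max y 0) - h 0 - h' 0 * max y 0) - (h (max 0 0) - h 0 - h' 0 * max 0 0)) / (y - 0)) \<longlongrightarrow> 0) (at_left 0)"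
    proof (rule Lim_transform_eventually[where f="\<lambda>_. 0"])
      show "((\<lambda>_. 0::real) \<longlongrightarrow> 0) (at_left 0)" by simp
      show "\<forall>\<^sub>F y in at_left 0. 0 = ((h (max y 0) - h 0 - h' 0 * max y 0) - (h (max 0 0) - h 0 - h' 0 * max 0 0)) / (y - (0::real))"
        by (auto simp: eventually_at_left_field intro!: exI[of _ "-1"])
    qed
    have d0: "((\<lambda>y. (h y - h 0) / (y - 0)) \<longlongrightarrow> h' 0) (at 0)"
      using hd[of 0] by (simp add: has_field_derivative_iff)
    then have "((\<lambda>y. (h y - h 0) / (y - 0)) \<longlongrightarrow> h' 0) (at_right 0)"
      by (simp add: filterlim_at_split)
    then have "((\<lambda>y. (h y - h 0) / (y - 0) - h' 0) \<longlongrightarrow> h' 0 - h' 0) (at_right 0)"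
      by (intro tendsto_intros)
    then have d0': "((\<lambda>y. (h y - h 0) / (y - 0) - h' 0) \<longlongrightarrow> 0) (at_right 0)" by simp
    have R: "((\<lambda>y. ((h (max y 0) - h 0 - h' 0 * max y 0) - (h (max 0 0) - h 0 - h' 0 * max 0 0)) / (y - 0)) \<longlongrightarrow> 0) (at_right 0)"
    proof (rule Lim_transform_eventually[OF d0'])
      show "\<forall>\<^sub>F y in at_right 0. (h y - h 0) / (y - 0) - h' 0 = ((h (max y 0) - h 0 - h' 0 * max y 0) - (h (max 0 0) - h 0 - h' 0 * max 0 0)) / (y - (0::real))"
        by (auto simp: eventually_at_right_field field_simps intro!: exI[of _ "1"])
    qed
    show ?thesis unfolding x0 has_field_derivative_iff
      using L R by (simp add: filterlim_at_split)
  qed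
qed


lemma psi_cont:
  fixes h' :: "real \<Rightarrow> real"
  assumes hc: "continuous_on {0..} h'"
  shows "continuous_on A (\<lambda>u. h' (max u 0) - h' 0)"
proof -
  have "continuous_on A (\<lambda>u. max u (0::real))" by (intro continuous_intros)
  moreover have "(\<lambda>u. max u (0::real)) ` A \<subseteq> {0..}" by auto
  ultimately have "continuous_on A (h' \<circ> (\<lambda>u. max u 0))"
    using continuous_on_compose continuous_on_subset[OF hc] by blast
  then show ?thesis by (auto simp: o_def intro!: continuous_intros)
qed

lemma conv_deriv:
  fixes h h' F :: "real \<Rightarrow> real"
  assumes hd: "\<And>u. u \<ge> 0 \<Longrightarrow> (h has_real_derivative h' u) (at u)"
    and hc: "continuous_on {0..} h'"
    and Fc: "continuous_on {0..} F"
    and t: "0 \<le> t" "t \<le> T"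
  shows "((\<lambda>\<tau>. integral {0..\<tau>} (\<lambda>y. h (\<tau> - y) * F y)) has_real_derivative
           (h 0 * F t + integral {0..t} (\<lambda>y. h' (t - y) * F y))) (at t within {0..T})"
proof -
  define \<psi> where "\<psi> u = h (max u 0) - h 0 - h' 0 * max u 0" for u
  define \<psi>' where "\<psi>' u = h' (max u 0) - h' 0" for u
  have psd: "(\<psi> has_real_derivative \<psi>' u) (at u)" for u
    unfolding \<psi>_def[abs_def] \<psi>'_def using psi_deriv[OF hd] by blast
  have psc: "continuous_on A \<psi>" for A
    using psd by (meson DERIV_isCont continuous_at_imp_continuous_on)
  have ps'c: "continuous_on A \<psi>'" for A
    unfolding \<psi>'_def[abs_def] by (rule psi_cont[OF hc])
  have hcont: "continuous_on {0..} h"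
    using hd by (meson DERIV_isCont atLeast_iff continuous_at_imp_continuous_on)
  have FcT: "continuous_on {0..a} F" for a
    by (rule continuous_on_subset[OF Fc]) auto
  have hcT: "continuous_on {0..a} (\<lambda>y. h (\<tau> - y))" if "a \<le> \<tau>" for a \<tau>
  proof -
    have "continuous_on {0..a} (\<lambda>y. \<tau> - y)" by (intro continuous_intros)
    moreover have "(\<lambda>y. \<tau> - y) ` {0..a} \<subseteq> {0..}" using that by auto
    ultimately show ?thesis using continuous_on_compose continuous_on_subset[OF hcont]
      by (metis (no_types, lifting) comp_apply continuous_on_cong)
  qed
  have h'cT: "continuous_on {0..a} (\<lambda>y. h' (\<tau> - y))" if "a \<le> \<tau>" for a \<tau>
  proof -
    have "continuous_on {0..a} (\<lambda>y. \<tau> - y)" by (intro continuous_intros)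
    moreover have "(\<lambda>y. \<tau> - y) ` {0..a} \<subseteq> {0..}" using that by auto
    ultimately show ?thesis using continuous_on_compose continuous_on_subset[OF hc]
      by (metis (no_types, lifting) comp_apply continuous_on_cong)
  qed
  have pscT: "continuous_on A (\<lambda>y. \<psi> (\<tau> - y) * F y)" if "A \<subseteq> {0..}" for A \<tau>
    by (intro continuous_intros continuous_on_compose2[OF psc[of UNIV]] continuous_on_subset[OF Fc that]) auto
  have ps'cT: "continuous_on A (\<lambda>y. \<psi>' (\<tau> - y) * F y)" if "A \<subseteq> {0..}" for A \<tau>
    by (intro continuous_intros continuous_on_compose2[OF ps'c[of UNIV]] continuous_on_subset[OF Fc that]) auto
  have dec: "integral {0..\<tau>} (\<lambda>y. h (\<tau> - y) * F y) =
      integral {0..T} (\<lambda>y. \<psi> (\<tau> - y) * F y) + h 0 * integral {0..\<tau>} F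
      + h' 0 * (\<tau> * integral {0..\<tau>} F - integral {0..\<tau>} (\<lambda>y. y * F y))"
    if \<tau>: "0 \<le> \<tau>" "\<tau> \<le> T" for \<tau>
  proof -
    have "integral {0..T} (\<lambda>y. \<psi> (\<tau> - y) * F y) = integral {0..\<tau>} (\<lambda>y. \<psi> (\<tau> - y) * F y) + integral {\<tau>..T} (\<lambda>y. \<psi> (\<tau> - y) * F y)"
      using Henstock_Kurzweil_Integration.integral_combine[OF \<tau>, of "\<lambda>y. \<psi> (\<tau> - y) * F y"] pscT[of "{0..T}" \<tau>]
      by (simp add: integrable_continuous_interval)
    also have "integral {\<tau>..T} (\<lambda>y. \<psi> (\<tau> - y) * F y) = integral {\<tau>..T} (\<lambda>y. 0)"
      by (rule integral_cong) (auto simp: \<psi>_def)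
    also have "integral {0..\<tau>} (\<lambda>y. \<psi> (\<tau> - y) * F y) = integral {0..\<tau>} (\<lambda>y. h (\<tau> - y) * F y - h 0 * F y - h' 0 * (\<tau> * F y - y * F y))"
      by (rule integral_cong) (auto simp: \<psi>_def algebra_simps)
    also have "\<dots> = integral {0..\<tau>} (\<lambda>y. h (\<tau> - y) * F y) - h 0 * integral {0..\<tau>} F - h' 0 * (\<tau> * integral {0..\<tau>} F - integral {0..\<tau>} (\<lambda>y. y * F y))"
      using \<tau> hcT[of \<tau> \<tau>] FcT[of \<tau>]
      by (simp add: integral_diff integral_mult_right integrable_continuous_interval continuous_intros integrable_diff integrable_mult_right)
    finally show ?thesis by simp
  qed
  have D1: "((\<lambda>\<tau>. integral (cbox 0 T) (\<lambda>y. \<psi> (\<tau> - y) * F y)) has_field_derivative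
       integral (cbox 0 T) (\<lambda>y. \<psi>' (t - y) * F y)) (at t within {0..T})"
  proof (rule leibniz_rule_field_derivative)
    fix x y assume "x \<in> {0..T}" "y \<in> cbox 0 T"
    show "((\<lambda>x. \<psi> (x - y) * F y) has_field_derivative \<psi>' (x - y) * F y) (at x within {0..T})"
    proof -
      have "((\<lambda>x. x - y) has_real_derivative 1) (at x within {0..T})"
        by (auto intro!: derivative_eq_intros)
      then have "((\<lambda>x. \<psi> (x - y)) has_real_derivative \<psi>' (x - y) * 1) (at x within {0..T})"
        by (rule DERIV_chain2[OF psd])
      then have "((\<lambda>x. \<psi> (x - y)) has_real_derivative \<psi>' (x - y)) (at x within {0..T})" by simp
      from DERIV_cmult_right[OF this, of "F y"] show ?thesis .
    qed
  next
    fix x assume "x \<in> {0..T}"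
    show "(\<lambda>y. \<psi> (x - y) * F y) integrable_on cbox 0 T"
      using pscT[of "{0..T}" x] by (simp add: integrable_continuous_interval)
  next
    show "continuous_on ({0..T} \<times> cbox 0 T) (\<lambda>(x, y). \<psi>' (x - y) * F y)"
    proof -
      let ?S = "{0..T} \<times> cbox 0 T"
      have c1: "continuous_on ?S (\<lambda>z. \<psi>' (fst z - snd z))"
        by (rule continuous_on_compose2[OF ps'c[of UNIV]]) (auto intro!: continuous_intros)
      have c2: "continuous_on ?S (\<lambda>z. F (snd z))"
        by (rule continuous_on_compose2[OF Fc]) (auto intro!: continuous_intros)
      have "continuous_on ?S (\<lambda>z. \<psi>' (fst z - snd z) * F (snd z))"
        using c1 c2 by (rule continuous_on_mult)
      then show ?thesis by (simp add: split_beta)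
    qed
  qed (use t in auto)
  have D2: "((\<lambda>\<tau>. integral {0..\<tau>} F) has_real_derivative F t) (at t within {0..T})"
    using integral_has_real_derivative[OF FcT[of T]] t by auto
  have D3: "((\<lambda>\<tau>. integral {0..\<tau>} (\<lambda>y. y * F y)) has_real_derivative t * F t) (at t within {0..T})"
  proof -
    have "continuous_on {0..T} (\<lambda>y. y * F y)" using FcT[of T] by (intro continuous_intros)
    then show ?thesis using integral_has_real_derivative[of 0 T "\<lambda>y. y * F y" t] t by auto
  qed
  have D: "((\<lambda>\<tau>. integral {0..T} (\<lambda>y. \<psi> (\<tau> - y) * F y) + h 0 * integral {0..\<tau>} F
      + h' 0 * (\<tau> * integral {0..\<tau>} F - integral {0..\<tau>} (\<lambda>y. y * F y))) has_real_derivative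
      integral {0..T} (\<lambda>y. \<psi>' (t - y) * F y) + h 0 * F t + h' 0 * (1 * integral {0..t} F + t * F t - t * F t))
      (at t within {0..T})"
    using D1 D2 D3 by (auto intro!: derivative_eq_intros)
  have E: "integral {0..T} (\<lambda>y. \<psi>' (t - y) * F y) = integral {0..t} (\<lambda>y. h' (t - y) * F y) - h' 0 * integral {0..t} F"
  proof -
    have "integral {0..T} (\<lambda>y. \<psi>' (t - y) * F y) = integral {0..t} (\<lambda>y. \<psi>' (t - y) * F y) + integral {t..T} (\<lambda>y. \<psi>' (t - y) * F y)"
      using Henstock_Kurzweil_Integration.integral_combine[OF t, of "\<lambda>y. \<psi>' (t - y) * F y"] ps'cT[of "{0..T}" t]
      by (simp add: integrable_continuous_interval)
    also have "integral {t..T} (\<lambda>y. \<psi>' (t - y) * F y) = integral {t..T} (\<lambda>y. 0)"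
      by (rule integral_cong) (auto simp: \<psi>'_def)
    also have "integral {0..t} (\<lambda>y. \<psi>' (t - y) * F y) = integral {0..t} (\<lambda>y. h' (t - y) * F y - h' 0 * F y)"
      by (rule integral_cong) (auto simp: \<psi>'_def algebra_simps)
    also have "\<dots> = integral {0..t} (\<lambda>y. h' (t - y) * F y) - h' 0 * integral {0..t} F"
      using t h'cT[of t t] FcT[of t]
      by (simp add: integral_diff integrable_continuous_interval continuous_intros)
    finally show ?thesis by simp
  qed
  show ?thesis
    apply (rule has_field_derivative_transform_within[where d=1 and f="\<lambda>\<tau>. integral {0..T} (\<lambda>y. \<psi> (\<tau> - y) * F y) + h 0 * integral {0..\<tau>} F
      + h' 0 * (\<tau> * integral {0..\<tau>} F - integral {0..\<tau>} (\<lambda>y. y * F y))"])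
    using D E t dec by (auto simp: algebra_simps)
qed

lemma K_deriv: "u \<ge> 0 \<Longrightarrow> ((\<lambda>u. 1 / (1 + u) ^ 2) has_real_derivative (- (2 / (1 + u) ^ 3))) (at (u::real))"
proof -
  assume u: "u \<ge> 0"
  have "((\<lambda>u. inverse ((1 + u) ^ 2)) has_real_derivative - (inverse ((1+u)^2) * (of_nat 2 * (1 + u) ^ (2 - 1) * 1) * inverse ((1+u)^2))) (at u)"
    using u by (intro derivative_eq_intros DERIV_inverse_fun) auto
  moreover have gen: "\<And>x::real. x > 0 \<Longrightarrow> - (inverse (x^2) * (of_nat 2 * x ^ (2 - 1) * 1) * inverse (x^2)) = - (2 / x ^ 3)"
    by (simp add: field_simps power2_eq_square power3_eq_cube)
  ultimately show ?thesis using gen[of "1+u"] u by (simp add: divide_inverse)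
qed

lemma Phi_deriv: "x \<ge> 0 \<Longrightarrow> ((\<lambda>\<tau>. \<tau>^2 / (1 + \<tau>)^2) has_real_derivative 2 * x / (1 + x) ^ 3) (at (x::real))"
proof -
  assume x: "x \<ge> 0"
  have a: "((\<lambda>\<tau>. \<tau>^2) has_real_derivative 2*x) (at x)" by (auto intro!: derivative_eq_intros)
  have b: "((\<lambda>\<tau>. (1+\<tau>)^2) has_real_derivative 2*(1+x)) (at x)" by (auto intro!: derivative_eq_intros)
  have c: "(1+x)^2 \<noteq> 0" using x by auto
  have gen: "\<And>y::real. y > 0 \<Longrightarrow> (2*(y-1)*y^2 - (y-1)^2*(2*y))/(y^2*y^2) = 2*(y-1)/y^3"
    by (simp add: field_simps power2_eq_square power3_eq_cube)
  from DERIV_divide[OF a b c] gen[of "1+x"] x show ?thesis by simp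
qed
lemma K'_cont: "continuous_on {0..} (\<lambda>u::real. - (2 / (1 + u) ^ 3))"
  by (intro continuous_intros) auto

lemma identity_K:
  fixes F :: "real \<Rightarrow> real"
  assumes ren: "renewal_solution F" and t: "t \<ge> 0"
  shows "integral {0..t} (\<lambda>y. 1 / (1 + (t - y)) ^ 2 * F y) = t^2 / (1 + t)^2"
proof -
  have Fc: "continuous_on {0..} F" and Feq: "\<And>t. t \<ge> 0 \<Longrightarrow> F t = 2 * t / (1 + t) ^ 3
        + integral {0..t} (\<lambda>y. 2 / (1 + (t - y)) ^ 3 * F y)"
    using ren unfolding renewal_solution_def by auto
  define V where "V \<tau> = integral {0..\<tau>} (\<lambda>y. 1 / (1 + (\<tau> - y)) ^ 2 * F y) - \<tau>^2 / (1 + \<tau>)^2" for \<tau>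
  have "V \<tau> = V 0" if "\<tau> \<in> {0..t}" for \<tau>
  proof -
    have "\<exists>c. \<forall>x\<in>{0..t}. V x = c"
    proof (rule has_field_derivative_zero_constant)
      fix x assume x: "x \<in> {0..t}"
      have D1: "((\<lambda>\<tau>. integral {0..\<tau>} (\<lambda>y. 1 / (1 + (\<tau> - y)) ^ 2 * F y)) has_real_derivative
           (1 / (1 + 0) ^ 2 * F x + integral {0..x} (\<lambda>y. - (2 / (1 + (x - y)) ^ 3) * F y))) (at x within {0..t})"
        by (rule conv_deriv[where h="\<lambda>u. 1 / (1 + u) ^ 2" and h'="\<lambda>u. - (2 / (1 + u) ^ 3)", OF K_deriv K'_cont Fc]) (use x in auto)
      have "integral {0..x} (\<lambda>y. - (2 / (1 + (x - y)) ^ 3) * F y) = - integral {0..x} (\<lambda>y. 2 / (1 + (x - y)) ^ 3 * F y)"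
        by (simp add: integral_neg)
      also have "\<dots> = 2 * x / (1 + x) ^ 3 - F x" using Feq[of x] x by auto
      finally have I: "integral {0..x} (\<lambda>y. - (2 / (1 + (x - y)) ^ 3) * F y) = 2 * x / (1 + x) ^ 3 - F x" .
      have D2: "((\<lambda>\<tau>. \<tau>^2 / (1 + \<tau>)^2) has_real_derivative 2 * x / (1 + x) ^ 3) (at x within {0..t})"
        using Phi_deriv[of x] x by (auto intro: has_field_derivative_at_within)
      show "(V has_real_derivative 0) (at x within {0..t})"
      proof (rule DERIV_cong)
        show "(V has_real_derivative (1 / (1 + 0) ^ 2 * F x + integral {0..x} (\<lambda>y. - (2 / (1 + (x - y)) ^ 3) * F y)) - 2 * x / (1 + x) ^ 3) (at x within {0..t})"
          unfolding V_def[abs_def] by (rule DERIV_diff[OF D1 D2])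
        show "(1 / (1 + 0) ^ 2 * F x + integral {0..x} (\<lambda>y. - (2 / (1 + (x - y)) ^ 3) * F y)) - 2 * x / (1 + x) ^ 3 = 0"
          using I by simp
      qed
    qed auto
    then show ?thesis using that t by force
  qed
  moreover have "V 0 = 0" by (simp add: V_def)
  ultimately show ?thesis using t by (simp add: V_def)
qed

lemma cont_conv_integrand:
  fixes h F :: "real \<Rightarrow> real"
  assumes hc: "continuous_on {0..} h" and Fc: "continuous_on {0..} F" and ac: "a \<le> c"
  shows "continuous_on {0..a} (\<lambda>y. h (c - y) * F y)"
proof -
  have "continuous_on {0..a} (\<lambda>y. h (c - y))"
    by (rule continuous_on_compose2[OF hc]) (use ac in \<open>auto intro!: continuous_intros\<close>)
  moreover have "continuous_on {0..a} F" by (rule continuous_on_subset[OF Fc]) auto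
  ultimately show ?thesis by (intro continuous_intros)
qed

lemma cont_shift:
  fixes F :: "real \<Rightarrow> real"
  assumes Fc: "continuous_on {0..} F" and \<delta>: "\<delta> \<ge> 0"
  shows "continuous_on {0..} (\<lambda>u. F (u + \<delta>))"
  by (rule continuous_on_compose2[OF Fc]) (use \<delta> in \<open>auto intro!: continuous_intros\<close>)

lemma shift_split:
  fixes h F :: "real \<Rightarrow> real"
  assumes hc: "continuous_on {0..} h" and Fc: "continuous_on {0..} F" and t: "t \<ge> 0" and \<delta>: "\<delta> \<ge> 0"
  shows "integral {0..t+\<delta>} (\<lambda>y. h (t+\<delta>-y) * F y) = integral {0..\<delta>} (\<lambda>y. h (t+\<delta>-y) * F y) + integral {0..t} (\<lambda>u. h (t-u) * F (u+\<delta>))"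
proof -
  have int: "(\<lambda>y. h (t+\<delta>-y) * F y) integrable_on {0..t+\<delta>}"
    by (rule integrable_continuous_interval, rule cont_conv_integrand[OF hc Fc]) simp
  have "integral {0..t+\<delta>} (\<lambda>y. h (t+\<delta>-y) * F y) = integral {0..\<delta>} (\<lambda>y. h (t+\<delta>-y) * F y) + integral {\<delta>..t+\<delta>} (\<lambda>y. h (t+\<delta>-y) * F y)"
    using Henstock_Kurzweil_Integration.integral_combine[of 0 \<delta> "t+\<delta>", OF _ _ int] t \<delta> by simp
  also have "integral {\<delta>..t+\<delta>} (\<lambda>y. h (t+\<delta>-y) * F y) = integral {0..t} ((\<lambda>y. h (t+\<delta>-y) * F y) \<circ> (+) \<delta>)"
  proof -
    have "integral {0..t} ((\<lambda>y. h (t+\<delta>-y) * F y) \<circ> (+) \<delta>) = integral {0+\<delta>..t+\<delta>} (\<lambda>y. h (t+\<delta>-y) * F y)"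
      by (rule integral_shift_Icc_real)
    then show ?thesis by simp
  qed
  also have "\<dots> = integral {0..t} (\<lambda>u. h (t-u) * F (u+\<delta>))"
  proof (rule integral_cong)
    fix u assume "u \<in> {0..t}"
    have "t + \<delta> - (\<delta> + u) = t - u" "\<delta> + u = u + \<delta>" by simp_all
    then show "((\<lambda>y. h (t+\<delta>-y) * F y) \<circ> (+) \<delta>) u = h (t-u) * F (u+\<delta>)"
      by (simp only: o_def)
  qed
  finally show ?thesis .
qed

lemma f_cont: "continuous_on {0..} (\<lambda>u::real. 2 / (1 + u) ^ 3)"
  by (intro continuous_intros) auto

lemma K_cont: "continuous_on {0..} (\<lambda>u::real. 1 / (1 + u) ^ 2)"
  by (intro continuous_intros) auto

lemma A_bound:
  fixes x \<delta> M :: real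
  assumes x: "x \<ge> 1" and \<delta>: "0 < \<delta>" "\<delta> \<le> 1" and M: "M \<ge> 0" "\<delta> * M \<le> 1/8"
  shows "2 * (x + \<delta> - 1) / (x + \<delta>) ^ 3 - 2 * (x - 1) / x ^ 3
      + 2 / x * ((x + \<delta> - 1) ^ 2 / (x + \<delta>) ^ 2 - (x - 1) ^ 2 / x ^ 2) - 2 * \<delta> ^ 2 * M / x ^ 4 \<ge> 0"
proof -
  define X where "X = x + \<delta>"
  have X: "X > 0" "X \<ge> x" "X \<le> 2 * x" using x \<delta> by (auto simp: X_def)
  have eq: "2 * (X - 1) / X ^ 3 - 2 * (x - 1) / x ^ 3 + 2 / x * ((X - 1) ^ 2 / X ^ 2 - (x - 1) ^ 2 / x ^ 2)
      = 2 * (X - x) ^ 2 / (x ^ 2 * X ^ 2) + 2 * (X - x) / (x * X ^ 3)"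
    using X x by (simp add: field_simps power2_eq_square power3_eq_cube)
  have "X ^ 3 \<le> (2 * x) ^ 3" using X by (intro power_mono) auto
  have X3: "\<delta> * M * X ^ 3 \<le> x ^ 3"
  proof -
    have "\<delta> * M * X ^ 3 \<le> (1/8) * X ^ 3" using M X by (intro mult_right_mono) auto
    also have "\<dots> \<le> (1/8) * (2 * x) ^ 3" using \<open>X ^ 3 \<le> (2 * x) ^ 3\<close> by simp
    also have "\<dots> = x ^ 3" by (simp add: power_mult_distrib)
    finally show ?thesis .
  qed
  have "2 * \<delta> ^ 2 * M / x ^ 4 = 2 * \<delta> * (\<delta> * M * X ^ 3) / (x ^ 4 * X ^ 3)"
    using X x by (simp add: field_simps power2_eq_square)
  also have "\<dots> \<le> 2 * \<delta> * x ^ 3 / (x ^ 4 * X ^ 3)"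
    using X3 \<delta> X x by (intro divide_right_mono mult_left_mono) auto
  also have "\<dots> = 2 * (X - x) / (x * X ^ 3)"
  proof -
    have "X - x = \<delta>" by (simp add: X_def)
    moreover have "x ^ 4 * X ^ 3 = x * X ^ 3 * x ^ 3" by (simp add: eval_nat_numeral)
    ultimately show ?thesis using x X by simp
  qed
  finally have "2 * \<delta> ^ 2 * M / x ^ 4 \<le> 2 * (X - x) / (x * X ^ 3)" .
  moreover have "2 * (X - x) ^ 2 / (x ^ 2 * X ^ 2) \<ge> 0" by simp
  ultimately show ?thesis using eq unfolding X_def by linarith
qed


lemma A_bound':
  fixes t \<delta> M :: real
  assumes t: "t \<ge> 0" and \<delta>: "0 < \<delta>" "\<delta> \<le> 1" and M: "M \<ge> 0" "\<delta> * M \<le> 1/8"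
  shows "2 * (t + \<delta>) / (1 + (t + \<delta>)) ^ 3 - 2 * t / (1 + t) ^ 3
      + 2 / (1 + t) * ((t + \<delta>) ^ 2 / (1 + (t + \<delta>)) ^ 2 - t ^ 2 / (1 + t) ^ 2) - 2 * \<delta> ^ 2 * M / (1 + t) ^ 4 \<ge> 0"
proof -
  have "1 + t \<ge> 1" using t by simp
  from A_bound[OF this \<delta> M] show ?thesis by (simp add: add.assoc)
qed

lemma kd_eq: "(a::real) > 0 \<Longrightarrow> b > 0 \<Longrightarrow> 2 / a * (1 / b ^ 2) - 2 / b ^ 3 = 2 * (b - a) / (a * b ^ 3)"
  by (simp add: field_simps power2_eq_square power3_eq_cube)

lemma kernel_diff_bound:
  fixes t s :: real
  assumes t: "t \<ge> 0" and s: "t \<le> s" "s \<le> t + \<delta>"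
  shows "0 \<le> 2 / (1 + t) * (1 / (1 + s) ^ 2) - 2 / (1 + s) ^ 3"
    and "2 / (1 + t) * (1 / (1 + s) ^ 2) - 2 / (1 + s) ^ 3 \<le> 2 * \<delta> / (1 + t) ^ 4"
proof -
  have eq: "2 / (1 + t) * (1 / (1 + s) ^ 2) - 2 / (1 + s) ^ 3 = 2 * (s - t) / ((1 + t) * (1 + s) ^ 3)"
    using kd_eq[of "1 + t" "1 + s"] t s by simp
  show "0 \<le> 2 / (1 + t) * (1 / (1 + s) ^ 2) - 2 / (1 + s) ^ 3"
    unfolding eq using t s by simp
  have "(1 + t) ^ 3 \<le> (1 + s) ^ 3" using t s by (intro power_mono) auto
  then have "(1 + t) * (1 + t) ^ 3 \<le> (1 + t) * (1 + s) ^ 3" using t by (intro mult_left_mono) auto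
  moreover have "(1 + t) ^ 4 = (1 + t) * (1 + t) ^ 3" by (simp add: eval_nat_numeral)
  ultimately have den: "(1 + t) ^ 4 \<le> (1 + t) * (1 + s) ^ 3" by simp
  have "2 * (s - t) / ((1 + t) * (1 + s) ^ 3) \<le> 2 * \<delta> / ((1 + t) * (1 + s) ^ 3)"
    using t s by (intro divide_right_mono) auto
  also have "\<dots> \<le> 2 * \<delta> / (1 + t) ^ 4"
    using t s den by (intro divide_left_mono) (auto intro!: mult_pos_pos)
  finally show "2 / (1 + t) * (1 / (1 + s) ^ 2) - 2 / (1 + s) ^ 3 \<le> 2 * \<delta> / (1 + t) ^ 4"
    unfolding eq .
qed

lemma k_bounds:
  fixes t u :: real
  assumes "0 \<le> u" "u \<le> t"
  shows "0 \<le> 2 / (1 + (t - u)) ^ 3 - 2 / (1 + t) * (1 / (1 + (t - u)) ^ 2)"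
    and "2 / (1 + (t - u)) ^ 3 - 2 / (1 + t) * (1 / (1 + (t - u)) ^ 2) \<le> 2"
proof -
  define s where "s = t - u"
  have s: "0 \<le> s" "s \<le> t" using assms by (auto simp: s_def)
  have eq: "2 / (1 + s) ^ 3 - 2 / (1 + t) * (1 / (1 + s) ^ 2) = 2 * (t - s) / ((1 + t) * (1 + s) ^ 3)"
  proof -
    have e1: "2 / (1 + t) * (1 / (1 + s) ^ 2) - 2 / (1 + s) ^ 3 = 2 * (s - t) / ((1 + t) * (1 + s) ^ 3)"
      using kd_eq[of "1 + t" "1 + s"] s by simp
    have e2: "- (2 * (s - t)) = 2 * (t - s)" by simp
    have "2 / (1 + s) ^ 3 - 2 / (1 + t) * (1 / (1 + s) ^ 2) = - (2 * (s - t) / ((1 + t) * (1 + s) ^ 3))"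
      using e1 by linarith
    also have "\<dots> = 2 * (t - s) / ((1 + t) * (1 + s) ^ 3)"
      by (metis e2 minus_divide_left)
    finally show ?thesis .
  qed
  show "0 \<le> 2 / (1 + (t - u)) ^ 3 - 2 / (1 + t) * (1 / (1 + (t - u)) ^ 2)"
    using eq s unfolding s_def[symmetric] by simp
  have "2 / (1 + t) * (1 / (1 + s) ^ 2) \<ge> 0" using s by simp
  moreover have "2 / (1 + s) ^ 3 \<le> 2"
  proof -
    have "1 \<le> (1 + s) ^ 3" using s by (simp add: one_le_power)
    then show ?thesis using s by (simp add: divide_le_eq)
  qed
  ultimately show "2 / (1 + (t - u)) ^ 3 - 2 / (1 + t) * (1 / (1 + (t - u)) ^ 2) \<le> 2"
    unfolding s_def[symmetric] by linarith
qed

lemma gronwall0: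
  fixes \<phi> :: "real \<Rightarrow> real"
  assumes cont: "continuous_on {0..T} \<phi>" and nn: "\<And>t. t \<in> {0..T} \<Longrightarrow> \<phi> t \<ge> 0"
    and le: "\<And>t. t \<in> {0..T} \<Longrightarrow> \<phi> t \<le> C * integral {0..t} \<phi>" and C: "C \<ge> 0"
    and t: "t \<in> {0..T}"
  shows "\<phi> t = 0"
proof -
  define \<psi> where "\<psi> s = exp (- C * s) * integral {0..s} \<phi>" for s
  have der: "(\<psi> has_real_derivative (exp (- C * s) * (- C) * integral {0..s} \<phi> + exp (- C * s) * \<phi> s)) (at s within {0..t})"
    if s: "s \<in> {0..t}" for s
  proof -
    have "continuous_on {0..t} \<phi>" by (rule continuous_on_subset[OF cont]) (use t in auto)
    then have "((\<lambda>s. integral {0..s} \<phi>) has_real_derivative \<phi> s) (at s within {0..t})"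
      using integral_has_real_derivative s by blast
    then show ?thesis unfolding \<psi>_def[abs_def]
      by (auto intro!: derivative_eq_intros)
  qed
  have "\<exists>x\<in>{0..t}. \<psi> t - \<psi> 0 = (\<lambda>h. h * (exp (- C * x) * (- C) * integral {0..x} \<phi> + exp (- C * x) * \<phi> x)) (t - 0)"
  proof (rule mvt_very_simple)
    show "0 \<le> t" using t by auto
    fix x assume "0 \<le> x" "x \<le> t"
    then have "(\<psi> has_real_derivative (exp (- C * x) * (- C) * integral {0..x} \<phi> + exp (- C * x) * \<phi> x)) (at x within {0..t})"
      using der by auto
    then show "(\<psi> has_derivative (\<lambda>h. h * (exp (- C * x) * (- C) * integral {0..x} \<phi> + exp (- C * x) * \<phi> x))) (at x within {0..t})"
      unfolding has_field_derivative_def by (simp add: mult_commute_abs)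
  qed
  then obtain x where x: "x \<in> {0..t}" and eq: "\<psi> t - \<psi> 0 = (t - 0) * (exp (- C * x) * (- C) * integral {0..x} \<phi> + exp (- C * x) * \<phi> x)"
    by auto
  have xT: "x \<in> {0..T}" using x t by auto
  have "exp (- C * x) * (- C) * integral {0..x} \<phi> + exp (- C * x) * \<phi> x = exp (- C * x) * (\<phi> x - C * integral {0..x} \<phi>)"
    by (simp add: algebra_simps)
  also have "\<dots> \<le> 0" using le[OF xT] by (simp add: mult_nonneg_nonpos)
  finally have "\<psi> t \<le> 0" using eq t by (simp add: \<psi>_def mult_nonneg_nonpos)
  then have "integral {0..t} \<phi> \<le> 0" unfolding \<psi>_def by (simp add: mult_le_0_iff)
  then have "\<phi> t \<le> 0" using le[OF t] C by (smt (verit) mult_nonneg_nonpos)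
  then show ?thesis using nn[OF t] by simp
qed

lemma helper_distr: "((a::real) - c * b) * (P - Q) = (a * P - a * Q) - c * (b * P - b * Q)"
  by (simp add: algebra_simps)

lemma lin_aux:
  fixes Ft1 Ft G1 G0 I1 J1 J0 P1 P0 I2 L1 L0 c :: real
  shows "Ft1 = G1 + I1 + J1 \<Longrightarrow> Ft = G0 + J0 \<Longrightarrow> P1 = I2 + L1 \<Longrightarrow> P0 = L0 \<Longrightarrow>
    (Ft1 - Ft) - ((J1 - J0) - c * (L1 - L0)) = (G1 - G0 + c * (P1 - P0)) + (I1 - c * I2)"
  by (simp add: algebra_simps)

lemma F_shift_mono:
  fixes F :: "real \<Rightarrow> real"
  assumes ren: "renewal_solution F" and \<delta>: "0 < \<delta>" "\<delta> \<le> 1"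
    and M: "M \<ge> 0" "\<And>y. y \<in> {0..1} \<Longrightarrow> \<bar>F y\<bar> \<le> M" "\<delta> * M \<le> 1/8" and t0: "t0 \<ge> 0"
  shows "F t0 \<le> F (t0 + \<delta>)"
proof -
  have Fc: "continuous_on {0..} F" and Feq: "\<And>t. t \<ge> 0 \<Longrightarrow> F t = 2 * t / (1 + t) ^ 3
        + integral {0..t} (\<lambda>y. 2 / (1 + (t - y)) ^ 3 * F y)"
    using ren unfolding renewal_solution_def by auto
  define D where "D t = F (t + \<delta>) - F t" for t
  define N where "N t = max (- D t) 0" for t
  have Fsc: "continuous_on {0..} (\<lambda>u. F (u + \<delta>))" using cont_shift[OF Fc] \<delta> by simp
  have Dc: "continuous_on {0..} D" unfolding D_def[abs_def] using Fsc Fc by (intro continuous_intros)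
  have Nc: "continuous_on {0..} N" unfolding N_def[abs_def] using Dc by (intro continuous_intros)
  have key: "- D t \<le> integral {0..t} (\<lambda>u. (2 / (1 + (t - u)) ^ 3 - 2 / (1 + t) * (1 / (1 + (t - u)) ^ 2)) * (- D u))"
    if t: "t \<ge> 0" for t
  proof -
    define J1 where "J1 = integral {0..t} (\<lambda>u. 2 / (1 + (t - u)) ^ 3 * F (u + \<delta>))"
    define J0 where "J0 = integral {0..t} (\<lambda>u. 2 / (1 + (t - u)) ^ 3 * F u)"
    define L1 where "L1 = integral {0..t} (\<lambda>u. 1 / (1 + (t - u)) ^ 2 * F (u + \<delta>))"
    define L0 where "L0 = integral {0..t} (\<lambda>u. 1 / (1 + (t - u)) ^ 2 * F u)"
    define I1 where "I1 = integral {0..\<delta>} (\<lambda>y. 2 / (1 + (t + \<delta> - y)) ^ 3 * F y)"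
    define I2 where "I2 = integral {0..\<delta>} (\<lambda>y. 1 / (1 + (t + \<delta> - y)) ^ 2 * F y)"
    have c1: "continuous_on {0..t} (\<lambda>u. 2 / (1 + (t - u)) ^ 3 * F (u + \<delta>))"
      using cont_conv_integrand[OF f_cont Fsc, of t t] by simp
    have c0: "continuous_on {0..t} (\<lambda>u. 2 / (1 + (t - u)) ^ 3 * F u)"
      using cont_conv_integrand[OF f_cont Fc, of t t] by simp
    have d1: "continuous_on {0..t} (\<lambda>u. 1 / (1 + (t - u)) ^ 2 * F (u + \<delta>))"
      using cont_conv_integrand[OF K_cont Fsc, of t t] by simp
    have d0: "continuous_on {0..t} (\<lambda>u. 1 / (1 + (t - u)) ^ 2 * F u)"
      using cont_conv_integrand[OF K_cont Fc, of t t] by simp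
    have E1: "F (t + \<delta>) = 2 * (t + \<delta>) / (1 + (t + \<delta>)) ^ 3 + I1 + J1"
    proof -
      have "F (t + \<delta>) = 2 * (t + \<delta>) / (1 + (t + \<delta>)) ^ 3 + integral {0..t+\<delta>} (\<lambda>y. 2 / (1 + (t + \<delta> - y)) ^ 3 * F y)"
        using Feq[of "t + \<delta>"] t \<delta> by simp
      also have "integral {0..t+\<delta>} (\<lambda>y. 2 / (1 + (t + \<delta> - y)) ^ 3 * F y) = I1 + J1"
        unfolding I1_def J1_def
        using shift_split[OF f_cont Fc t, of \<delta>] \<delta> by simp
      finally show ?thesis by simp
    qed
    have E2: "F t = 2 * t / (1 + t) ^ 3 + J0" using Feq[OF t] by (simp add: J0_def)
    have E3: "(t + \<delta>) ^ 2 / (1 + (t + \<delta>)) ^ 2 = I2 + L1"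
    proof -
      have "(t + \<delta>) ^ 2 / (1 + (t + \<delta>)) ^ 2 = integral {0..t+\<delta>} (\<lambda>y. 1 / (1 + (t + \<delta> - y)) ^ 2 * F y)"
        using identity_K[OF ren, of "t + \<delta>"] t \<delta> by simp
      also have "\<dots> = I2 + L1"
        unfolding I2_def L1_def
        using shift_split[OF K_cont Fc t, of \<delta>] \<delta> by simp
      finally show ?thesis .
    qed
    have E4: "t ^ 2 / (1 + t) ^ 2 = L0" using identity_K[OF ren t] by (simp add: L0_def)
    have split: "integral {0..t} (\<lambda>u. (2 / (1 + (t - u)) ^ 3 - 2 / (1 + t) * (1 / (1 + (t - u)) ^ 2)) * D u)
        = (J1 - J0) - 2 / (1 + t) * (L1 - L0)"
    proof -
      have "integral {0..t} (\<lambda>u. (2 / (1 + (t - u)) ^ 3 - 2 / (1 + t) * (1 / (1 + (t - u)) ^ 2)) * D u)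
          = integral {0..t} (\<lambda>u. (2 / (1 + (t - u)) ^ 3 * F (u + \<delta>) - 2 / (1 + (t - u)) ^ 3 * F u)
              - 2 / (1 + t) * (1 / (1 + (t - u)) ^ 2 * F (u + \<delta>) - 1 / (1 + (t - u)) ^ 2 * F u))"
        by (rule integral_cong) (simp only: D_def helper_distr)
      also have "\<dots> = integral {0..t} (\<lambda>u. 2 / (1 + (t - u)) ^ 3 * F (u + \<delta>) - 2 / (1 + (t - u)) ^ 3 * F u)
              - integral {0..t} (\<lambda>u. 2 / (1 + t) * (1 / (1 + (t - u)) ^ 2 * F (u + \<delta>) - 1 / (1 + (t - u)) ^ 2 * F u))"
      proof (rule integral_diff)
        show "(\<lambda>u. 2 / (1 + (t - u)) ^ 3 * F (u + \<delta>) - 2 / (1 + (t - u)) ^ 3 * F u) integrable_on {0..t}"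
          by (intro integrable_diff integrable_continuous_interval c1 c0)
        have "(\<lambda>u. 1 / (1 + (t - u)) ^ 2 * F (u + \<delta>) - 1 / (1 + (t - u)) ^ 2 * F u) integrable_on {0..t}"
          by (intro integrable_diff integrable_continuous_interval d1 d0)
        from integrable_on_cmult_left[OF this, of "2 / (1 + t)"]
        show "(\<lambda>u. 2 / (1 + t) * (1 / (1 + (t - u)) ^ 2 * F (u + \<delta>) - 1 / (1 + (t - u)) ^ 2 * F u)) integrable_on {0..t}"
          by (simp only: of_real_eq_id id_apply)
      qed
      also have "integral {0..t} (\<lambda>u. 2 / (1 + (t - u)) ^ 3 * F (u + \<delta>) - 2 / (1 + (t - u)) ^ 3 * F u) = J1 - J0"
        unfolding J1_def J0_def
        by (rule integral_diff) (use c1 c0 in \<open>auto intro!: integrable_continuous_interval\<close>)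
      also have "integral {0..t} (\<lambda>u. 2 / (1 + t) * (1 / (1 + (t - u)) ^ 2 * F (u + \<delta>) - 1 / (1 + (t - u)) ^ 2 * F u))
          = 2 / (1 + t) * integral {0..t} (\<lambda>u. 1 / (1 + (t - u)) ^ 2 * F (u + \<delta>) - 1 / (1 + (t - u)) ^ 2 * F u)"
        by (rule integral_mult_right)
      also have "integral {0..t} (\<lambda>u. 1 / (1 + (t - u)) ^ 2 * F (u + \<delta>) - 1 / (1 + (t - u)) ^ 2 * F u) = L1 - L0"
        unfolding L1_def L0_def
        by (rule integral_diff) (use d1 d0 in \<open>auto intro!: integrable_continuous_interval\<close>)
      finally show ?thesis .
    qed
    have Ibound: "I1 - 2 / (1 + t) * I2 \<ge> - (2 * \<delta> ^ 2 * M / (1 + t) ^ 4)"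
    proof -
      have "I1 - 2 / (1 + t) * I2 = integral {0..\<delta>} (\<lambda>y. (2 / (1 + (t + \<delta> - y)) ^ 3 - 2 / (1 + t) * (1 / (1 + (t + \<delta> - y)) ^ 2)) * F y)"
      proof -
        have ci1: "continuous_on {0..\<delta>} (\<lambda>y. 2 / (1 + (t + \<delta> - y)) ^ 3 * F y)"
          using cont_conv_integrand[OF f_cont Fc, of \<delta> "t + \<delta>"] t by simp
        have ci2: "continuous_on {0..\<delta>} (\<lambda>y. 1 / (1 + (t + \<delta> - y)) ^ 2 * F y)"
          using cont_conv_integrand[OF K_cont Fc, of \<delta> "t + \<delta>"] t by simp
        have "integral {0..\<delta>} (\<lambda>y. 2 / (1 + (t + \<delta> - y)) ^ 3 * F y - 2 / (1 + t) * (1 / (1 + (t + \<delta> - y)) ^ 2 * F y))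
            = I1 - integral {0..\<delta>} (\<lambda>y. 2 / (1 + t) * (1 / (1 + (t + \<delta> - y)) ^ 2 * F y))"
          unfolding I1_def
        proof (rule integral_diff)
          show "(\<lambda>y. 2 / (1 + (t + \<delta> - y)) ^ 3 * F y) integrable_on {0..\<delta>}"
            by (intro integrable_continuous_interval ci1)
          have "(\<lambda>y. 1 / (1 + (t + \<delta> - y)) ^ 2 * F y) integrable_on {0..\<delta>}"
            by (intro integrable_continuous_interval ci2)
          from integrable_on_cmult_left[OF this, of "2 / (1 + t)"]
          show "(\<lambda>y. 2 / (1 + t) * (1 / (1 + (t + \<delta> - y)) ^ 2 * F y)) integrable_on {0..\<delta>}"
            by (simp only: of_real_eq_id id_apply)
        qed
        also have "integral {0..\<delta>} (\<lambda>y. 2 / (1 + t) * (1 / (1 + (t + \<delta> - y)) ^ 2 * F y)) = 2 / (1 + t) * I2"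
          unfolding I2_def by (rule integral_mult_right)
        finally show ?thesis by (simp add: algebra_simps)
      qed
      also have "\<dots> \<ge> integral {0..\<delta>} (\<lambda>y. - (2 * \<delta> / (1 + t) ^ 4 * M))"
      proof (rule integral_le)
        show "(\<lambda>y. - (2 * \<delta> / (1 + t) ^ 4 * M)) integrable_on {0..\<delta>}" by (rule integrable_const_ivl)
        have "continuous_on {0..\<delta>} (\<lambda>y. (2 / (1 + (t + \<delta> - y)) ^ 3 - 2 / (1 + t) * (1 / (1 + (t + \<delta> - y)) ^ 2)) * F y)"
        proof -
          have ci1: "continuous_on {0..\<delta>} (\<lambda>y. 2 / (1 + (t + \<delta> - y)) ^ 3 * F y)"
            using cont_conv_integrand[OF f_cont Fc, of \<delta> "t + \<delta>"] t by simp
          have ci2: "continuous_on {0..\<delta>} (\<lambda>y. 1 / (1 + (t + \<delta> - y)) ^ 2 * F y)"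
            using cont_conv_integrand[OF K_cont Fc, of \<delta> "t + \<delta>"] t by simp
          have "continuous_on {0..\<delta>} (\<lambda>y. 2 / (1 + (t + \<delta> - y)) ^ 3 * F y - 2 / (1 + t) * (1 / (1 + (t + \<delta> - y)) ^ 2 * F y))"
            using ci1 ci2 by (intro continuous_on_diff continuous_on_mult_left)
          moreover have "(\<lambda>y. 2 / (1 + (t + \<delta> - y)) ^ 3 * F y - 2 / (1 + t) * (1 / (1 + (t + \<delta> - y)) ^ 2 * F y))
             = (\<lambda>y. (2 / (1 + (t + \<delta> - y)) ^ 3 - 2 / (1 + t) * (1 / (1 + (t + \<delta> - y)) ^ 2)) * F y)"
            by (rule ext) (simp add: left_diff_distrib)
          ultimately show ?thesis by metis
        qed
        then show "(\<lambda>y. (2 / (1 + (t + \<delta> - y)) ^ 3 - 2 / (1 + t) * (1 / (1 + (t + \<delta> - y)) ^ 2)) * F y) integrable_on {0..\<delta>}"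
          by (rule integrable_continuous_interval)
        fix y assume y: "y \<in> {0..\<delta>}"
        define w where "w = 2 / (1 + t) * (1 / (1 + (t + \<delta> - y)) ^ 2) - 2 / (1 + (t + \<delta> - y)) ^ 3"
        have w: "0 \<le> w" "w \<le> 2 * \<delta> / (1 + t) ^ 4"
          unfolding w_def using kernel_diff_bound[of t "t + \<delta> - y" \<delta>] t y by auto
        have Fy: "\<bar>F y\<bar> \<le> M" using M(2)[of y] y \<delta> by auto
        have "w * F y \<le> w * \<bar>F y\<bar>" using w by (simp add: mult_left_mono)
        also have "\<dots> \<le> (2 * \<delta> / (1 + t) ^ 4) * M" using w Fy by (intro mult_mono) auto
        finally have "w * F y \<le> (2 * \<delta> / (1 + t) ^ 4) * M" .
        moreover have "(2 / (1 + (t + \<delta> - y)) ^ 3 - 2 / (1 + t) * (1 / (1 + (t + \<delta> - y)) ^ 2)) * F y = - (w * F y)"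
          by (simp add: w_def algebra_simps)
        ultimately show "- (2 * \<delta> / (1 + t) ^ 4 * M) \<le> (2 / (1 + (t + \<delta> - y)) ^ 3 - 2 / (1 + t) * (1 / (1 + (t + \<delta> - y)) ^ 2)) * F y"
          by linarith
      qed
      also have "integral {0..\<delta>} (\<lambda>y. - (2 * \<delta> / (1 + t) ^ 4 * M)) = - (2 * \<delta> ^ 2 * M / (1 + t) ^ 4)"
        using \<delta> by (simp add: power2_eq_square)
      finally show ?thesis by simp
    qed
    have S: "D t - integral {0..t} (\<lambda>u. (2 / (1 + (t - u)) ^ 3 - 2 / (1 + t) * (1 / (1 + (t - u)) ^ 2)) * D u) \<ge> 0"
    proof -
      have "D t - integral {0..t} (\<lambda>u. (2 / (1 + (t - u)) ^ 3 - 2 / (1 + t) * (1 / (1 + (t - u)) ^ 2)) * D u)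
          = (2 * (t + \<delta>) / (1 + (t + \<delta>)) ^ 3 - 2 * t / (1 + t) ^ 3
            + 2 / (1 + t) * ((t + \<delta>) ^ 2 / (1 + (t + \<delta>)) ^ 2 - t ^ 2 / (1 + t) ^ 2))
            + (I1 - 2 / (1 + t) * I2)"
        unfolding split unfolding D_def by (rule lin_aux[OF E1 E2 E3 E4])
      moreover have "2 * (t + \<delta>) / (1 + (t + \<delta>)) ^ 3 - 2 * t / (1 + t) ^ 3
            + 2 / (1 + t) * ((t + \<delta>) ^ 2 / (1 + (t + \<delta>)) ^ 2 - t ^ 2 / (1 + t) ^ 2) - 2 * \<delta> ^ 2 * M / (1 + t) ^ 4 \<ge> 0"
        using A_bound'[OF t \<delta> M(1) M(3)] .
      ultimately show ?thesis using Ibound by linarith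
    qed
    have "integral {0..t} (\<lambda>u. (2 / (1 + (t - u)) ^ 3 - 2 / (1 + t) * (1 / (1 + (t - u)) ^ 2)) * (- D u))
        = - integral {0..t} (\<lambda>u. (2 / (1 + (t - u)) ^ 3 - 2 / (1 + t) * (1 / (1 + (t - u)) ^ 2)) * D u)"
      by (simp add: integral_neg)
    with S show ?thesis by linarith
  qed
  have Nle: "N t \<le> 2 * integral {0..t} N" if t: "t \<in> {0..t0}" for t
  proof -
    have Nint: "N integrable_on {0..t}"
      by (rule integrable_continuous_interval, rule continuous_on_subset[OF Nc]) auto
    have "integral {0..t} (\<lambda>u. (2 / (1 + (t - u)) ^ 3 - 2 / (1 + t) * (1 / (1 + (t - u)) ^ 2)) * (- D u))
        \<le> integral {0..t} (\<lambda>u. 2 * N u)"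
    proof (rule integral_le)
      have "continuous_on {0..t} (\<lambda>u. 1 + (t - u))" by (intro continuous_intros)
      have "continuous_on {0..t} (\<lambda>u. (2 / (1 + (t - u)) ^ 3 - 2 / (1 + t) * (1 / (1 + (t - u)) ^ 2)) * (- D u))"
        using continuous_on_subset[OF Dc, of "{0..t}"] t
        by (intro continuous_intros) auto
      then show "(\<lambda>u. (2 / (1 + (t - u)) ^ 3 - 2 / (1 + t) * (1 / (1 + (t - u)) ^ 2)) * (- D u)) integrable_on {0..t}"
        by (rule integrable_continuous_interval)
      show "(\<lambda>u. 2 * N u) integrable_on {0..t}" using Nint by simp
      fix u assume u: "u \<in> {0..t}"
      define k where "k = 2 / (1 + (t - u)) ^ 3 - 2 / (1 + t) * (1 / (1 + (t - u)) ^ 2)"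
      have k: "0 \<le> k" "k \<le> 2" unfolding k_def using k_bounds[of u t] u by auto
      have "k * (- D u) \<le> k * N u" using k by (intro mult_left_mono) (auto simp: N_def)
      also have "\<dots> \<le> 2 * N u" using k by (intro mult_right_mono) (auto simp: N_def)
      finally show "(2 / (1 + (t - u)) ^ 3 - 2 / (1 + t) * (1 / (1 + (t - u)) ^ 2)) * (- D u) \<le> 2 * N u"
        unfolding k_def .
    qed
    also have "\<dots> = 2 * integral {0..t} N" by (simp add: integral_mult_right)
    finally have "- D t \<le> 2 * integral {0..t} N" using key[of t] t by auto
    moreover have "integral {0..t} N \<ge> 0"
      using Nint by (intro integral_nonneg) (auto simp: N_def)
    ultimately show ?thesis by (simp add: N_def)
  qed
  have "N t0 = 0"
  proof (rule gronwall0[of t0 N 2])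
    show "continuous_on {0..t0} N" by (rule continuous_on_subset[OF Nc]) auto
  qed (use Nle t0 in \<open>auto simp: N_def\<close>)
  then show ?thesis by (simp add: N_def D_def)
qed


lemma F_mono:
  fixes F :: "real \<Rightarrow> real"
  assumes ren: "renewal_solution F" and ab: "0 \<le> a" "a \<le> b"
  shows "F a \<le> F b"
proof -
  have Fc: "continuous_on {0..} F" using ren unfolding renewal_solution_def by auto
  have "continuous_on {0..1} (\<lambda>y. \<bar>F y\<bar>)"
    by (intro continuous_intros continuous_on_subset[OF Fc]) auto
  then obtain x where x: "x \<in> {0..1::real}" and xm: "\<And>y. y \<in> {0..1} \<Longrightarrow> \<bar>F y\<bar> \<le> \<bar>F x\<bar>"
    using continuous_attains_sup[of "{0..1::real}" "\<lambda>y. \<bar>F y\<bar>"] by auto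
  define M where "M = \<bar>F x\<bar>"
  have M0: "M \<ge> 0" by (simp add: M_def)
  define \<delta>0 where "\<delta>0 = min 1 (1 / (8 * (M + 1)))"
  have \<delta>0: "0 < \<delta>0" "\<delta>0 \<le> 1" using M0 by (auto simp: \<delta>0_def)
  have \<delta>0M: "\<delta>0 * M \<le> 1/8"
  proof -
    have "\<delta>0 * M \<le> 1 / (8 * (M + 1)) * M" using M0 by (intro mult_right_mono) (auto simp: \<delta>0_def)
    also have "\<dots> \<le> 1/8" using M0 by (simp add: field_simps)
    finally show ?thesis .
  qed
  have step: "F s \<le> F (s + \<delta>)" if "s \<ge> 0" "0 < \<delta>" "\<delta> \<le> \<delta>0" for s \<delta>
  proof (rule F_shift_mono[OF ren])
    show "\<delta> * M \<le> 1/8" using \<delta>0M that M0 by (smt (verit) mult_right_mono)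
  qed (use that \<delta>0 M0 xm in \<open>auto simp: M_def\<close>)
  show ?thesis
  proof (cases "a = b")
    case True then show ?thesis by simp
  next
    case False
    define d where "d = b - a"
    have d: "d > 0" using ab False by (simp add: d_def)
    define n where "n = nat (ceiling (d / \<delta>0)) + 1"
    have n: "n \<ge> 1" by (simp add: n_def)
    have "d / \<delta>0 \<le> real n" unfolding n_def by linarith
    then have "d \<le> real n * \<delta>0" using \<delta>0 by (simp add: divide_le_eq mult.commute)
    then have stp: "d / real n \<le> \<delta>0" using n by (simp add: divide_le_eq mult.commute)
    have stp0: "d / real n > 0" using d n by simp
    have "F a \<le> F (a + real k * (d / real n))" for k
    proof (induction k)
      case 0 then show ?case by simp
    next
      case (Suc k)
      have "F (a + real k * (d / real n)) \<le> F (a + real k * (d / real n) + d / real n)"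
      proof (rule step)
        have "real k * (d / real n) \<ge> 0" using stp0 by (intro mult_nonneg_nonneg) auto
        then show "0 \<le> a + real k * (d / real n)" using ab by linarith
      qed (use stp stp0 in auto)
      moreover have "a + real (Suc k) * (d / real n) = a + real k * (d / real n) + d / real n"
        by (simp add: distrib_right add_divide_distrib)
      ultimately show ?case using Suc.IH by (metis order.trans)
    qed
    from this[of n] show ?thesis using n by (simp add: d_def)
  qed
qed

lemma int_K:
  fixes a t :: real
  assumes "0 \<le> a" "a \<le> t"
  shows "integral {a..t} (\<lambda>y. 1 / (1 + (t - y)) ^ 2) = 1 - 1 / (1 + (t - a))"
proof -
  have "((\<lambda>y. 1 / (1 + (t - y)) ^ 2) has_integral (1 / (1 + (t - t)) - 1 / (1 + (t - a)))) {a..t}"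
  proof (rule fundamental_theorem_of_calculus[OF assms(2)])
    fix x assume x: "x \<in> {a..t}"
    have "((\<lambda>y. inverse (1 + (t - y))) has_real_derivative - (inverse (1 + (t - x)) * (0 + (0 - 1)) * inverse (1 + (t - x)))) (at x within {a..t})"
      using x by (intro derivative_eq_intros DERIV_inverse_fun) auto
    moreover have "- (inverse (1 + (t - x)) * (0 + (0 - 1)) * inverse (1 + (t - x))) = 1 / (1 + (t - x)) ^ 2"
      by (simp add: power2_eq_square divide_inverse)
    ultimately show "((\<lambda>y. 1 / (1 + (t - y))) has_vector_derivative 1 / (1 + (t - x)) ^ 2) (at x within {a..t})"
      by (simp add: has_real_derivative_iff_has_vector_derivative[symmetric] divide_inverse)
  qed
  then show ?thesis by (simp add: integral_unique)
qed

lemma int_inv: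
  fixes s :: real
  assumes "0 \<le> s"
  shows "integral {0..s} (\<lambda>y. 1 / (1 + y)) = ln (1 + s)"
proof -
  have "((\<lambda>y. 1 / (1 + y)) has_integral (ln (1 + s) - ln (1 + 0))) {0..s}"
  proof (rule fundamental_theorem_of_calculus[OF assms])
    fix x assume x: "x \<in> {0..s}"
    have "((\<lambda>y. ln (1 + y)) has_real_derivative 1 / (1 + x)) (at x within {0..s})"
      using x by (auto intro!: derivative_eq_intros simp: field_simps)
    then show "((\<lambda>y. ln (1 + y)) has_vector_derivative 1 / (1 + x)) (at x within {0..s})"
      by (simp add: has_real_derivative_iff_has_vector_derivative[symmetric])
  qed
  then show ?thesis by (simp add: integral_unique)
qed

lemma alg1: "(x::real) > 0 \<Longrightarrow> (1 - 1 / x) - (x - 1) ^ 2 / x ^ 2 = (x - 1) / x ^ 2"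
  by (simp add: field_simps power2_eq_square)

lemma alg2: "(x::real) > 0 \<Longrightarrow> 1 - 1 / x = (x - 1) / x"
  by (simp add: field_simps)

lemma alg3:
  fixes t x r :: real
  assumes "t > 0" "x > 0" "r * (t / x) \<le> t / x ^ 2"
  shows "r \<le> 1 / x"
proof -
  have "t / x ^ 2 = (1 / x) * (t / x)" by (simp add: power2_eq_square)
  then have "r * (t / x) \<le> (1 / x) * (t / x)" using assms(3) by metis
  moreover have "t / x > 0" using assms(1,2) by simp
  ultimately show ?thesis by (rule mult_right_le_imp_le)
qed

lemma F0: "renewal_solution F \<Longrightarrow> F 0 = 0"
  unfolding renewal_solution_def by auto

lemma R_J:
  fixes F :: "real \<Rightarrow> real"
  assumes ren: "renewal_solution F" and t: "t \<ge> 0"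
  shows "integral {0..t} (\<lambda>y. 1 / (1 + (t - y)) ^ 2 * (1 - F y)) = t / (1 + t) ^ 2"
proof -
  have Fc: "continuous_on {0..} F" using ren unfolding renewal_solution_def by auto
  have c1: "continuous_on {0..t} (\<lambda>y. 1 / (1 + (t - y)) ^ 2)"
    by (intro continuous_intros) auto
  have c2: "continuous_on {0..t} (\<lambda>y. 1 / (1 + (t - y)) ^ 2 * F y)"
    using cont_conv_integrand[OF K_cont Fc, of t t] by simp
  have "integral {0..t} (\<lambda>y. 1 / (1 + (t - y)) ^ 2 * (1 - F y))
      = integral {0..t} (\<lambda>y. 1 / (1 + (t - y)) ^ 2 - 1 / (1 + (t - y)) ^ 2 * F y)"
    by (simp add: right_diff_distrib)
  also have "\<dots> = integral {0..t} (\<lambda>y. 1 / (1 + (t - y)) ^ 2) - integral {0..t} (\<lambda>y. 1 / (1 + (t - y)) ^ 2 * F y)"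
    by (rule integral_diff) (use c1 c2 in \<open>auto intro: integrable_continuous_interval\<close>)
  also have "\<dots> = (1 - 1 / (1 + t)) - t ^ 2 / (1 + t) ^ 2"
    using int_K[of 0 t] identity_K[OF ren t] t by simp
  also have "\<dots> = t / (1 + t) ^ 2"
    using alg1[of "1 + t"] t by simp
  finally show ?thesis .
qed

lemma R_up:
  fixes F :: "real \<Rightarrow> real"
  assumes ren: "renewal_solution F" and t: "t \<ge> 0"
  shows "1 - F t \<le> 1 / (1 + t)"
proof (cases "t = 0")
  case True then show ?thesis using F0[OF ren] by simp
next
  case False
  then have tp: "t > 0" using t by simp
  have Fc: "continuous_on {0..} F" using ren unfolding renewal_solution_def by auto
  have c1: "continuous_on {0..t} (\<lambda>y. 1 / (1 + (t - y)) ^ 2)"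
    by (intro continuous_intros) auto
  have c2: "continuous_on {0..t} (\<lambda>y. 1 / (1 + (t - y)) ^ 2 * (1 - F y))"
    using c1 continuous_on_subset[OF Fc, of "{0..t}"] by (intro continuous_intros) auto
  have "(1 - F t) * (t / (1 + t)) = integral {0..t} (\<lambda>y. 1 / (1 + (t - y)) ^ 2 * (1 - F t))"
  proof -
    have "integral {0..t} (\<lambda>y. 1 / (1 + (t - y)) ^ 2 * (1 - F t)) = integral {0..t} (\<lambda>y. 1 / (1 + (t - y)) ^ 2) * (1 - F t)"
      by (rule integral_mult_left)
    also have "\<dots> = (1 - 1 / (1 + t)) * (1 - F t)" using int_K[of 0 t] t by simp
    also have "\<dots> = (1 - F t) * (t / (1 + t))" using alg2[of "1 + t"] t by simp
    finally show ?thesis by simp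
  qed
  also have "\<dots> \<le> integral {0..t} (\<lambda>y. 1 / (1 + (t - y)) ^ 2 * (1 - F y))"
  proof (rule integral_le)
    show "(\<lambda>y. 1 / (1 + (t - y)) ^ 2 * (1 - F t)) integrable_on {0..t}"
      using c1 by (intro integrable_continuous_interval continuous_on_mult_right)
    show "(\<lambda>y. 1 / (1 + (t - y)) ^ 2 * (1 - F y)) integrable_on {0..t}"
      using c2 by (rule integrable_continuous_interval)
    fix y assume y: "y \<in> {0..t}"
    then have "F y \<le> F t" using F_mono[OF ren] by auto
    then show "1 / (1 + (t - y)) ^ 2 * (1 - F t) \<le> 1 / (1 + (t - y)) ^ 2 * (1 - F y)"
      using y by (intro mult_left_mono) auto
  qed
  also have "\<dots> = t / (1 + t) ^ 2" by (rule R_J[OF ren t])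
  finally have "(1 - F t) * (t / (1 + t)) \<le> t / (1 + t) ^ 2" .
  then show ?thesis using alg3[of t "1 + t" "1 - F t"] tp by simp
qed


lemma R_low:
  fixes F :: "real \<Rightarrow> real"
  assumes ren: "renewal_solution F" and s: "s \<ge> 0" and a: "a > 0"
  shows "(s + a) / (1 + (s + a)) ^ 2 \<le> ln (1 + s) / (1 + a) ^ 2 + (1 - F s) * (a / (1 + a))"
proof -
  define t where "t = s + a"
  have t: "t \<ge> 0" "s \<le> t" using s a by (auto simp: t_def)
  have Fc: "continuous_on {0..} F" using ren unfolding renewal_solution_def by auto
  have c1: "continuous_on {0..t} (\<lambda>y. 1 / (1 + (t - y)) ^ 2)"
    by (intro continuous_intros) auto
  have c2: "continuous_on {0..t} (\<lambda>y. 1 / (1 + (t - y)) ^ 2 * (1 - F y))"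
    using c1 continuous_on_subset[OF Fc, of "{0..t}"] by (intro continuous_intros) auto
  have "t / (1 + t) ^ 2 = integral {0..t} (\<lambda>y. 1 / (1 + (t - y)) ^ 2 * (1 - F y))"
    using R_J[OF ren t(1)] by simp
  also have "\<dots> = integral {0..s} (\<lambda>y. 1 / (1 + (t - y)) ^ 2 * (1 - F y)) + integral {s..t} (\<lambda>y. 1 / (1 + (t - y)) ^ 2 * (1 - F y))"
    using Henstock_Kurzweil_Integration.integral_combine[of 0 s t, OF s t(2) integrable_continuous_interval[OF c2]] by simp
  also have "integral {0..s} (\<lambda>y. 1 / (1 + (t - y)) ^ 2 * (1 - F y)) \<le> integral {0..s} (\<lambda>y. 1 / (1 + a) ^ 2 * (1 / (1 + y)))"
  proof (rule integral_le)
    show "(\<lambda>y. 1 / (1 + (t - y)) ^ 2 * (1 - F y)) integrable_on {0..s}"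
      by (rule integrable_continuous_interval, rule continuous_on_subset[OF c2]) (use t in auto)
    have "continuous_on {0..s} (\<lambda>y. 1 / (1 + y))" by (intro continuous_intros) auto
    then show "(\<lambda>y. 1 / (1 + a) ^ 2 * (1 / (1 + y))) integrable_on {0..s}"
      by (intro integrable_continuous_interval continuous_on_mult_left)
    fix y assume y: "y \<in> {0..s}"
    have Ry: "1 - F y \<le> 1 / (1 + y)" using R_up[OF ren, of y] y by auto
    have K0: "0 \<le> 1 / (1 + (t - y)) ^ 2" using y t by auto
    have Ka: "1 / (1 + (t - y)) ^ 2 \<le> 1 / (1 + a) ^ 2"
    proof -
      have "(1 + a) ^ 2 \<le> (1 + (t - y)) ^ 2" using y a by (intro power_mono) (auto simp: t_def)
      moreover have "0 < (1 + (t - y)) ^ 2 * (1 + a) ^ 2" using a y t by (intro mult_pos_pos) auto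
      ultimately show ?thesis using a by (intro divide_left_mono) auto
    qed
    have "1 / (1 + (t - y)) ^ 2 * (1 - F y) \<le> 1 / (1 + (t - y)) ^ 2 * (1 / (1 + y))"
      using Ry K0 by (rule mult_left_mono)
    also have "\<dots> \<le> 1 / (1 + a) ^ 2 * (1 / (1 + y))"
      using Ka y by (intro mult_right_mono) auto
    finally show "1 / (1 + (t - y)) ^ 2 * (1 - F y) \<le> 1 / (1 + a) ^ 2 * (1 / (1 + y))" .
  qed
  also have "integral {0..s} (\<lambda>y. 1 / (1 + a) ^ 2 * (1 / (1 + y))) = ln (1 + s) / (1 + a) ^ 2"
  proof -
    have "integral {0..s} (\<lambda>y. 1 / (1 + a) ^ 2 * (1 / (1 + y))) = 1 / (1 + a) ^ 2 * integral {0..s} (\<lambda>y. 1 / (1 + y))"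
      by (rule integral_mult_right)
    then show ?thesis using int_inv[OF s] by simp
  qed
  also have "integral {s..t} (\<lambda>y. 1 / (1 + (t - y)) ^ 2 * (1 - F y)) \<le> integral {s..t} (\<lambda>y. 1 / (1 + (t - y)) ^ 2 * (1 - F s))"
  proof (rule integral_le)
    show "(\<lambda>y. 1 / (1 + (t - y)) ^ 2 * (1 - F y)) integrable_on {s..t}"
      by (rule integrable_continuous_interval, rule continuous_on_subset[OF c2]) (use s in auto)
    have "continuous_on {s..t} (\<lambda>y. 1 / (1 + (t - y)) ^ 2)" by (rule continuous_on_subset[OF c1]) (use s in auto)
    then show "(\<lambda>y. 1 / (1 + (t - y)) ^ 2 * (1 - F s)) integrable_on {s..t}"
      by (intro integrable_continuous_interval continuous_on_mult_right)
    fix y assume y: "y \<in> {s..t}"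
    have "F s \<le> F y" using F_mono[OF ren s] y by auto
    then show "1 / (1 + (t - y)) ^ 2 * (1 - F y) \<le> 1 / (1 + (t - y)) ^ 2 * (1 - F s)"
      using y by (intro mult_left_mono) auto
  qed
  also have "integral {s..t} (\<lambda>y. 1 / (1 + (t - y)) ^ 2 * (1 - F s)) = (1 - F s) * (a / (1 + a))"
  proof -
    have "integral {s..t} (\<lambda>y. 1 / (1 + (t - y)) ^ 2 * (1 - F s)) = integral {s..t} (\<lambda>y. 1 / (1 + (t - y)) ^ 2) * (1 - F s)"
      by (rule integral_mult_left)
    also have "\<dots> = (1 - 1 / (1 + a)) * (1 - F s)" using int_K[of s t] s t by (simp add: t_def)
    also have "\<dots> = (1 - F s) * (a / (1 + a))" using alg2[of "1 + a"] a by simp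
    finally show ?thesis .
  qed
  finally show ?thesis by (simp add: t_def add_mono)
qed

lemma low_aux:
  fixes a s Q R :: real
  assumes a: "a > 0" and s: "s > 0" and Q: "Q \<le> R * (a / (1 + a))"
  shows "s * (1 + a) / a * Q \<le> s * R"
proof -
  have p: "(1 + a) / a > 0" using a by simp
  have "Q * ((1 + a) / a) \<le> R * (a / (1 + a)) * ((1 + a) / a)"
    using Q p by (intro mult_right_mono) auto
  also have "R * (a / (1 + a)) * ((1 + a) / a) = R"
  proof -
    have n1: "1 + a \<noteq> 0" "a \<noteq> 0" using a by auto
    have "a / (1 + a) * ((1 + a) / a) = 1" using n1 by simp
    then show ?thesis by (metis mult.assoc mult.right_neutral)
  qed
  finally have "Q * ((1 + a) / a) \<le> R" .
  then have "s * (Q * ((1 + a) / a)) \<le> s * R" using s by (intro mult_left_mono) auto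
  then show ?thesis by (simp add: algebra_simps)
qed

lemma sR_lim:
  fixes F :: "real \<Rightarrow> real"
  assumes ren: "renewal_solution F"
  shows "((\<lambda>s. s * (1 - F s)) \<longlongrightarrow> 1) at_top"
proof (rule tendsto_sandwich)
  show "((\<lambda>s::real. s * (1 + s powr (3/4)) / s powr (3/4) * ((s + s powr (3/4)) / (1 + (s + s powr (3/4))) ^ 2 - ln (1 + s) / (1 + s powr (3/4)) ^ 2)) \<longlongrightarrow> 1) at_top"
    by real_asymp
  show "((\<lambda>s::real. s * (1 / (1 + s))) \<longlongrightarrow> 1) at_top"
    by real_asymp
  show "\<forall>\<^sub>F s in at_top. s * (1 + s powr (3/4)) / s powr (3/4) * ((s + s powr (3/4)) / (1 + (s + s powr (3/4))) ^ 2 - ln (1 + s) / (1 + s powr (3/4)) ^ 2) \<le> s * (1 - F s)"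
  proof (rule eventually_mono[OF eventually_gt_at_top[of 0]])
    fix s :: real assume s: "s > 0"
    have a: "s powr (3/4) > 0" using s by simp
    have "(s + s powr (3/4)) / (1 + (s + s powr (3/4))) ^ 2 - ln (1 + s) / (1 + s powr (3/4)) ^ 2 \<le> (1 - F s) * (s powr (3/4) / (1 + s powr (3/4)))"
      using R_low[OF ren _ a, of s] s by simp
    then show "s * (1 + s powr (3/4)) / s powr (3/4) * ((s + s powr (3/4)) / (1 + (s + s powr (3/4))) ^ 2 - ln (1 + s) / (1 + s powr (3/4)) ^ 2) \<le> s * (1 - F s)"
      by (rule low_aux[OF a s])
  qed
  show "\<forall>\<^sub>F s in at_top. s * (1 - F s) \<le> s * (1 / (1 + s))"
  proof (rule eventually_mono[OF eventually_gt_at_top[of 0]])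
    fix s :: real assume s: "s > 0"
    show "s * (1 - F s) \<le> s * (1 / (1 + s))"
      using R_up[OF ren, of s] s by (intro mult_left_mono) auto
  qed
qed

lemma indef_deriv_at:
  fixes g :: "real \<Rightarrow> real"
  assumes gc: "continuous_on {0..} g" and x: "x > 0"
  shows "((\<lambda>t. integral {0..t} g) has_real_derivative g x) (at x)"
proof -
  have "continuous_on {0..x+1} g" by (rule continuous_on_subset[OF gc]) auto
  then have "((\<lambda>t. integral {0..t} g) has_real_derivative g x) (at x within {0..x+1})"
    using integral_has_real_derivative[of 0 "x+1" g x] x by auto
  then have "((\<lambda>t. integral {0..t} g) has_real_derivative g x) (at x within {0<..<x+1})"
    by (rule DERIV_subset) auto
  moreover have "at x within {0<..<x+1} = at x" using x by (intro at_within_open) auto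
  ultimately show ?thesis by simp
qed

lemma indef_cont:
  fixes g :: "real \<Rightarrow> real"
  assumes gc: "continuous_on {0..h} g"
  shows "continuous_on {0..h} (\<lambda>t. integral {0..t} g)"
  by (rule DERIV_continuous_on[of _ _ g]) (use integral_has_real_derivative[OF gc] in auto)

lemma int_id: "h \<ge> 0 \<Longrightarrow> integral {0..h} (\<lambda>t::real. t) = h ^ 2 / 2"
proof -
  assume h: "h \<ge> 0"
  have "((\<lambda>t::real. t) has_integral (h ^ 2 / 2 - 0 ^ 2 / 2)) {0..h}"
  proof (rule fundamental_theorem_of_calculus[OF h])
    fix x :: real assume "x \<in> {0..h}"
    have "((\<lambda>t::real. t ^ 2 / 2) has_real_derivative x) (at x within {0..h})"
      by (auto intro!: derivative_eq_intros)
    then show "((\<lambda>t::real. t ^ 2 / 2) has_vector_derivative x) (at x within {0..h})"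
      by (simp add: has_real_derivative_iff_has_vector_derivative[symmetric])
  qed
  then show ?thesis by (simp add: integral_unique)
qed

lemma I1_formula:
  fixes F F' :: "real \<Rightarrow> real"
  assumes ren: "renewal_solution F" and D: "\<And>t. t > 0 \<Longrightarrow> (F has_real_derivative F' t) (at t)" and h: "h \<ge> 0"
  shows "integral {0..h} (\<lambda>t. t * F' t) = integral {0..h} (\<lambda>t. 1 - F t) - h * (1 - F h)"
proof -
  have Fc: "continuous_on {0..} F" using ren unfolding renewal_solution_def by auto
  have FcT: "continuous_on {0..h} F" by (rule continuous_on_subset[OF Fc]) auto
  have "((\<lambda>t. t * F' t) has_integral ((h * F h - integral {0..h} F) - (0 * F 0 - integral {0..0} F))) {0..h}"
  proof (rule fundamental_theorem_of_calculus_interior[OF h])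
    show "continuous_on {0..h} (\<lambda>t. t * F t - integral {0..t} F)"
      using FcT indef_cont[OF FcT] by (intro continuous_intros)
    fix x assume x: "x \<in> {0<..<h}"
    have "((\<lambda>t. t * F t - integral {0..t} F) has_real_derivative (1 * F x + x * F' x - F x)) (at x)"
      using D[of x] indef_deriv_at[OF Fc, of x] x by (auto intro!: derivative_eq_intros)
    then show "((\<lambda>t. t * F t - integral {0..t} F) has_vector_derivative x * F' x) (at x)"
      by (simp add: has_real_derivative_iff_has_vector_derivative[symmetric])
  qed
  then have "integral {0..h} (\<lambda>t. t * F' t) = h * F h - integral {0..h} F"
    by (simp add: integral_unique)
  moreover have "integral {0..h} (\<lambda>t. 1 - F t) = h - integral {0..h} F"
    using integral_diff[of "\<lambda>t. 1" "{0..h}" F] FcT h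
    by (simp add: integrable_continuous_interval)
  ultimately show ?thesis by (simp add: algebra_simps)
qed

lemma I2_formula:
  fixes F F' :: "real \<Rightarrow> real"
  assumes ren: "renewal_solution F" and D: "\<And>t. t > 0 \<Longrightarrow> (F has_real_derivative F' t) (at t)" and h: "h \<ge> 0"
  shows "integral {0..h} (\<lambda>t. t ^ 2 * F' t) = 2 * integral {0..h} (\<lambda>t. t * (1 - F t)) - h ^ 2 * (1 - F h)"
proof -
  have Fc: "continuous_on {0..} F" using ren unfolding renewal_solution_def by auto
  have FcT: "continuous_on {0..h} F" by (rule continuous_on_subset[OF Fc]) auto
  have yFc: "continuous_on {0..} (\<lambda>y. y * F y)" using Fc by (intro continuous_intros)
  have yFcT: "continuous_on {0..h} (\<lambda>y. y * F y)" using FcT by (intro continuous_intros)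
  have "((\<lambda>t. t ^ 2 * F' t) has_integral ((h ^ 2 * F h - 2 * integral {0..h} (\<lambda>y. y * F y)) - (0 ^ 2 * F 0 - 2 * integral {0..0} (\<lambda>y. y * F y)))) {0..h}"
  proof (rule fundamental_theorem_of_calculus_interior[OF h])
    show "continuous_on {0..h} (\<lambda>t. t ^ 2 * F t - 2 * integral {0..t} (\<lambda>y. y * F y))"
      using FcT indef_cont[OF yFcT] by (intro continuous_intros)
    fix x assume x: "x \<in> {0<..<h}"
    have "((\<lambda>t. t ^ 2 * F t - 2 * integral {0..t} (\<lambda>y. y * F y)) has_real_derivative
        (real 2 * x ^ (2 - 1) * 1 * F x + x ^ 2 * F' x - 2 * (x * F x))) (at x)"
      using D[of x] indef_deriv_at[OF yFc, of x] x by (auto intro!: derivative_eq_intros)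
    then show "((\<lambda>t. t ^ 2 * F t - 2 * integral {0..t} (\<lambda>y. y * F y)) has_vector_derivative x ^ 2 * F' x) (at x)"
      by (simp add: has_real_derivative_iff_has_vector_derivative[symmetric])
  qed
  then have "integral {0..h} (\<lambda>t. t ^ 2 * F' t) = h ^ 2 * F h - 2 * integral {0..h} (\<lambda>y. y * F y)"
    by (simp add: integral_unique)
  moreover have "integral {0..h} (\<lambda>t. t * (1 - F t)) = h ^ 2 / 2 - integral {0..h} (\<lambda>y. y * F y)"
  proof -
    have "integral {0..h} (\<lambda>t. t * (1 - F t)) = integral {0..h} (\<lambda>t. t - t * F t)"
      by (simp add: right_diff_distrib)
    also have "\<dots> = integral {0..h} (\<lambda>t. t) - integral {0..h} (\<lambda>y. y * F y)"
      by (rule integral_diff) (use yFcT in \<open>auto intro: integrable_continuous_interval continuous_intros\<close>)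
    finally show ?thesis using int_id[OF h] by simp
  qed
  ultimately show ?thesis by (simp add: algebra_simps)
qed

theorem lemma2:
  fixes F F' :: "real \<Rightarrow> real"
  assumes "renewal_solution F"
    and "\<And>t. t > 0 \<Longrightarrow> (F has_real_derivative F' t) (at t)"
  shows "((\<lambda>h. integral {0..h} (\<lambda>t. t * F' t)) \<sim>[at_top] (\<lambda>h. ln h)) \<and>
         ((\<lambda>h. integral {0..h} (\<lambda>t. t ^ 2 * F' t)) \<sim>[at_top] (\<lambda>h. h))"
proof -
  note ren = assms(1) and D = assms(2)
  have Fc: "continuous_on {0..} F" using ren unfolding renewal_solution_def by auto
  have Rc: "continuous_on {0..} (\<lambda>t. 1 - F t)" using Fc by (intro continuous_intros)
  have tRc: "continuous_on {0..} (\<lambda>t. t * (1 - F t))" using Rc by (intro continuous_on_mult continuous_on_id)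
  have sR: "((\<lambda>s. s * (1 - F s)) \<longlongrightarrow> 1) at_top" by (rule sR_lim[OF ren])
  have A: "((\<lambda>h. integral {0..h} (\<lambda>t. 1 - F t) / ln h) \<longlongrightarrow> 1) at_top"
  proof (rule lhospital_at_top_at_top[where f' = "\<lambda>t. 1 - F t" and g' = "\<lambda>t. 1 / t"])
    show "LIM x at_top. ln (x::real) :> at_top" by (rule ln_at_top)
    show "\<forall>\<^sub>F x in at_top. 1 / (x::real) \<noteq> 0" using eventually_gt_at_top[of 0] by eventually_elim simp
    show "\<forall>\<^sub>F x in at_top. ((\<lambda>h. integral {0..h} (\<lambda>t. 1 - F t)) has_real_derivative 1 - F x) (at x)"
      using eventually_gt_at_top[of 0] by eventually_elim (rule indef_deriv_at[OF Rc])
    show "\<forall>\<^sub>F x in at_top. (ln has_real_derivative 1 / x) (at x)"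
      using eventually_gt_at_top[of 0] by eventually_elim (auto intro!: derivative_eq_intros)
    show "((\<lambda>x. (1 - F x) / (1 / x)) \<longlongrightarrow> 1) at_top"
      by (rule Lim_transform_eventually[OF sR]) (use eventually_gt_at_top[of 0] in \<open>eventually_elim, simp\<close>)
  qed
  have B: "((\<lambda>h. integral {0..h} (\<lambda>t. t * (1 - F t)) / h) \<longlongrightarrow> 1) at_top"
  proof (rule lhospital_at_top_at_top[where f' = "\<lambda>t. t * (1 - F t)" and g' = "\<lambda>t. 1"])
    show "LIM x at_top. (x::real) :> at_top" by (rule filterlim_ident)
    show "\<forall>\<^sub>F x in at_top. (1::real) \<noteq> 0" by simp
    show "\<forall>\<^sub>F x in at_top. ((\<lambda>h. integral {0..h} (\<lambda>t. t * (1 - F t))) has_real_derivative x * (1 - F x)) (at x)"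
      using eventually_gt_at_top[of 0] by eventually_elim (rule indef_deriv_at[OF tRc])
    show "\<forall>\<^sub>F x in at_top. ((\<lambda>x. x) has_real_derivative 1) (at x)"
      by (simp add: DERIV_ident)
    show "((\<lambda>x. x * (1 - F x) / 1) \<longlongrightarrow> 1) at_top" using sR by simp
  qed
  have lninv: "((\<lambda>h::real. 1 / ln h) \<longlongrightarrow> 0) at_top" by real_asymp
  have C1: "((\<lambda>h. integral {0..h} (\<lambda>t. t * F' t) / ln h) \<longlongrightarrow> 1) at_top"
  proof -
    have "((\<lambda>h. integral {0..h} (\<lambda>t. 1 - F t) / ln h - h * (1 - F h) * (1 / ln h)) \<longlongrightarrow> 1 - 1 * 0) at_top"
      by (intro tendsto_intros A sR lninv)
    then have L: "((\<lambda>h. integral {0..h} (\<lambda>t. 1 - F t) / ln h - h * (1 - F h) * (1 / ln h)) \<longlongrightarrow> 1) at_top" by simp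
    have "\<forall>\<^sub>F h in at_top. integral {0..h} (\<lambda>t. 1 - F t) / ln h - h * (1 - F h) * (1 / ln h) = integral {0..h} (\<lambda>t. t * F' t) / ln h"
        using eventually_gt_at_top[of 0]
      proof eventually_elim
        case (elim h)
        then show ?case using I1_formula[OF ren D, of h] by (simp add: diff_divide_distrib)
      qed
    with L show ?thesis by (rule Lim_transform_eventually)
  qed
  have C2: "((\<lambda>h. integral {0..h} (\<lambda>t. t ^ 2 * F' t) / h) \<longlongrightarrow> 1) at_top"
  proof -
    have "((\<lambda>h. 2 * (integral {0..h} (\<lambda>t. t * (1 - F t)) / h) - h * (1 - F h)) \<longlongrightarrow> 2 * 1 - 1) at_top"
      by (intro tendsto_intros B sR)
    then have L: "((\<lambda>h. 2 * (integral {0..h} (\<lambda>t. t * (1 - F t)) / h) - h * (1 - F h)) \<longlongrightarrow> 1) at_top" by simp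
    have "\<forall>\<^sub>F h in at_top. 2 * (integral {0..h} (\<lambda>t. t * (1 - F t)) / h) - h * (1 - F h) = integral {0..h} (\<lambda>t. t ^ 2 * F' t) / h"
        using eventually_gt_at_top[of 0]
      proof eventually_elim
        case (elim h)
        then show ?case using I2_formula[OF ren D, of h] by (simp add: field_simps power2_eq_square)
      qed
    with L show ?thesis by (rule Lim_transform_eventually)
  qed
  show ?thesis using asymp_equivI'[OF C1] asymp_equivI'[OF C2] by simp
qed

end
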